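(* Let $f:\mathbb{R}^n\to\mathbb{R}$ be convex and $M$-Lipschitz continuous, $h$ proper closed convex, $\phi=f+h$, $\lambda>0$, $\delta>0$, and $x_0=w_{k-1}\in\mathrm{dom}\, h$. Let $\psi(u)=\phi(u)+\frac1{2\lambda}\|u-x_0\|^2$. For $j\ge1$ let $\Gamma_j:\mathbb{R}^n\to\mathbb{R}$ be convex functions with $\Gamma_j\le f$ (bundle models), let $x_j=\mathrm{argmin}_{u}\{\Gamma_j(u)+h(u)+\frac1{2\lambda}\|u-x_0\|^2\}$, $m_j=\Gamma_j(x_j)+h(x_j)+\frac1{2\lambda}\|x_j-x_0\|^2$, $\tilde x_j\in\mathrm{Argmin}\{\psi(u):u\in\{x_0,x_1,\dots,x_j\}\}$, and $t_j=\psi(\tilde x_j)-m_j$. Suppose $j$ is the first index with $t_j\le\delta$, and set $$w_k=x_j,\quad \tilde w_k=\tilde x_j,\quad u_k=\frac{x_0-x_j}{\lambda},\quad \eta_k=\phi(\tilde x_j)-(\Gamma_j+h)(x_j)+\frac1\lambda\langle x_0-x_j,x_j-\tilde x_j\rangle.$$ Then $u_k\in\partial_{\eta_k}\phi(\tilde w_k)$, $\|\lambda u_k+\tilde w_k-w_{k-1}\|^2+2\lambda\eta_k\le2\lambda\delta$, and $w_k=w_{k-1}-\lambda u_k$; that is, this step of the modern proximal bundle method is an iteration of the HPE framework.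
   Context: $\partial_\varepsilon\phi(x)=\{s:\phi(y)\ge\phi(x)+\langle s,y-x\rangle-\varepsilon\ \forall y\}$. HPE framework (stepsize $\lambda$, tolerance $\delta$): at iteration $k$, find $(\tilde w_k,u_k,\eta_k)$ with $u_k\in\partial_{\eta_k}\phi(\tilde w_k)$ and $\|\lambda u_k+\tilde w_k-w_{k-1}\|^2+2\lambda\eta_k\le2\lambda\delta$, then set $w_k=w_{k-1}-\lambda u_k$. *)

theory Defs
  imports "HOL-Analysis.Analysis" "HOL-Library.Extended_Real"
begin

definition epigraph :: "('a \<Rightarrow> ereal) \<Rightarrow> ('a \<times> real) set" where
  "epigraph g = {(x, t). g x \<le> ereal t}"

definition edom :: "('a \<Rightarrow> ereal) \<Rightarrow> 'a set" where
  "edom g = {x. g x < \<infinity>}"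

definition proper_fun :: "('a \<Rightarrow> ereal) \<Rightarrow> bool" where
  "proper_fun g \<longleftrightarrow> (\<forall>x. g x \<noteq> -\<infinity>) \<and> (\<exists>x. g x < \<infinity>)"

definition convex_fun :: "('a::real_vector \<Rightarrow> ereal) \<Rightarrow> bool" where
  "convex_fun g \<longleftrightarrow> convex (epigraph g)"

definition closed_fun :: "('a::topological_space \<Rightarrow> ereal) \<Rightarrow> bool" where
  "closed_fun g \<longleftrightarrow> closed (epigraph g)"

definition eps_subdiff :: "('a::real_inner \<Rightarrow> ereal) \<Rightarrow> real \<Rightarrow> 'a \<Rightarrow> 'a set" where
  "eps_subdiff g \<epsilon> x = {s. \<forall>y. g y \<ge> g x + ereal (inner s (y - x) - \<epsilon>)}"

end

theory Submission
  imports Defs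
begin

lemma lim_ineq:
  fixes D P c :: real
  assumes c: "c \<ge> 0" and H: "\<And>\<tau>. 0 < \<tau> \<Longrightarrow> \<tau> \<le> 1 \<Longrightarrow> P - \<tau> * c \<le> D"
  shows "P \<le> D"
proof (rule ccontr)
  assume "\<not> P \<le> D"
  hence pd: "P - D > 0" by simp
  define \<tau> where "\<tau> = min 1 ((P - D) / (2 * c + 1))"
  have t0: "0 < \<tau>" "\<tau> \<le> 1" using pd c by (auto simp: \<tau>_def)
  have "\<tau> * c \<le> (P - D) / (2 * c + 1) * c"
    using c by (intro mult_right_mono) (auto simp: \<tau>_def)
  also have "\<dots> < P - D"
  proof -
    have "D * c \<le> P * c" using c pd by (intro mult_right_mono) auto
    thus ?thesis using pd c by (simp add: field_simps)
  qed
  finally show False using H[OF t0] by linarith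
qed

lemma quad_expand:
  fixes a b w :: "'a::real_inner"
  shows "norm ((1 - \<tau>) *\<^sub>R a + \<tau> *\<^sub>R b - w) ^ 2
    = norm (a - w) ^ 2 + 2 * \<tau> * inner (a - w) (b - a) + \<tau>^2 * norm (b - a) ^ 2"
proof -
  have "(1 - \<tau>) *\<^sub>R a + \<tau> *\<^sub>R b - w = (a - w) + \<tau> *\<^sub>R (b - a)"
    by (simp add: algebra_simps scaleR_diff_right scaleR_diff_left)
  hence "norm ((1 - \<tau>) *\<^sub>R a + \<tau> *\<^sub>R b - w) ^ 2 = norm ((a - w) + \<tau> *\<^sub>R (b - a)) ^ 2" by (simp only:)
  also have "\<dots> = norm (a - w) ^ 2 + 2 * \<tau> * inner (a - w) (b - a) + \<tau>^2 * norm (b - a) ^ 2"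
    unfolding power2_norm_eq_inner by (simp add: inner_add_left inner_add_right power2_eq_square inner_commute algebra_simps)
  finally show ?thesis .
qed

lemma real_alg:
  fixes lam tau Q N :: real
  assumes "lam > 0"
  shows "tau * ((1 / lam) * (- Q) - tau * (N / (2 * lam))) = - (2 * tau * Q + tau^2 * N) / (2 * lam)"
  using assms by (simp add: field_simps power2_eq_square)

lemma prox_subgrad:
  fixes g :: "'a::real_inner \<Rightarrow> real" and h :: "'a \<Rightarrow> ereal"
  assumes g: "convex_on UNIV g" and hc: "convex_fun h"
    and hninf: "\<And>u. h u \<noteq> -\<infinity>"
    and hx: "h xj = ereal hx" and lam: "lam > 0"
    and mn: "\<And>u. ereal (g xj) + h xj + ereal (norm (xj - w0) ^ 2 / (2 * lam))
        \<le> ereal (g u) + h u + ereal (norm (u - w0) ^ 2 / (2 * lam))"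
  shows "ereal (g y) + h y \<ge> ereal (g xj + hx + inner ((1 / lam) *\<^sub>R (w0 - xj)) (y - xj))"
proof (cases "h y")
  case PInf thus ?thesis by simp
next
  case MInf thus ?thesis using hninf by simp
next
  case (real hy)
  let ?c = "norm (y - xj) ^ 2 / (2 * lam)"
  let ?P = "inner ((1 / lam) *\<^sub>R (w0 - xj)) (y - xj)"
  have "?P - \<tau> * ?c \<le> g y + hy - g xj - hx" if t: "0 < \<tau>" "\<tau> \<le> 1" for \<tau>
  proof -
    define z where "z = (1 - \<tau>) *\<^sub>R xj + \<tau> *\<^sub>R y"
    have gz: "g z \<le> (1 - \<tau>) * g xj + \<tau> * g y"
      unfolding z_def using t by (intro convex_onD[OF g]) auto
    have "(xj, hx) \<in> epigraph h" "(y, hy) \<in> epigraph h"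
      using hx real by (auto simp: epigraph_def)
    hence "(1 - \<tau>) *\<^sub>R (xj, hx) + \<tau> *\<^sub>R (y, hy) \<in> epigraph h"
      using hc t unfolding convex_fun_def by (intro convexD) auto
    hence hz: "h z \<le> ereal ((1 - \<tau>) * hx + \<tau> * hy)"
      by (simp add: epigraph_def z_def)
    have "ereal (g xj + hx + norm (xj - w0) ^ 2 / (2 * lam))
        \<le> ereal (g z) + h z + ereal (norm (z - w0) ^ 2 / (2 * lam))"
      using mn[of z] hx by simp
    also have "\<dots> \<le> ereal (g z) + ereal ((1 - \<tau>) * hx + \<tau> * hy) + ereal (norm (z - w0) ^ 2 / (2 * lam))"
      using hz by (intro add_mono) auto
    finally have ineq: "g xj + hx + norm (xj - w0) ^ 2 / (2 * lam)
        \<le> g z + ((1 - \<tau>) * hx + \<tau> * hy) + norm (z - w0) ^ 2 / (2 * lam)"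
      by simp
    have qz: "norm (z - w0) ^ 2 = norm (xj - w0) ^ 2 + 2 * \<tau> * inner (xj - w0) (y - xj) + \<tau>^2 * norm (y - xj) ^ 2"
      unfolding z_def by (rule quad_expand)
    have "\<tau> * (?P - \<tau> * ?c) \<le> \<tau> * (g y + hy - g xj - hx)"
    proof -
      have P: "?P = (1 / lam) * (- inner (xj - w0) (y - xj))"
        by (metis inner_scaleR_left inner_minus_left minus_diff_eq)
      have e: "\<tau> * (?P - \<tau> * ?c) = - (2 * \<tau> * inner (xj - w0) (y - xj) + \<tau>^2 * norm (y - xj) ^ 2) / (2 * lam)"
        unfolding P by (rule real_alg[OF lam])
      define K where "K = (2 * \<tau> * inner (xj - w0) (y - xj) + \<tau>^2 * norm (y - xj) ^ 2) / (2 * lam)"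
      have "norm (z - w0) ^ 2 / (2 * lam) = norm (xj - w0) ^ 2 / (2 * lam) + K"
        unfolding qz K_def by (simp add: add_divide_distrib)
      hence "g xj + hx \<le> g z + ((1 - \<tau>) * hx + \<tau> * hy) + K" using ineq by linarith
      moreover have "(1-\<tau>)*g xj + \<tau>*g y + ((1-\<tau>)*hx + \<tau>*hy) + K = g xj + hx - \<tau>*(g xj + hx) + \<tau>*(g y + hy) + K"
        by (simp add: algebra_simps)
      ultimately have "\<tau> * (g xj + hx) \<le> \<tau> * (g y + hy) + K" using gz by linarith
      moreover have "- (2 * \<tau> * inner (xj - w0) (y - xj) + \<tau>^2 * norm (y - xj) ^ 2) / (2 * lam) = - K"
        unfolding K_def by (rule minus_divide_left[symmetric])
      moreover have "\<tau> * (g y + hy - g xj - hx) = \<tau>*(g y+hy) - \<tau>*(g xj + hx)" by (simp add: algebra_simps)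
      ultimately show ?thesis unfolding e by linarith
    qed
    thus ?thesis by (rule mult_left_le_imp_le) (use t in auto)
  qed
  note key = this
  have c0: "?c \<ge> 0" using lam by simp
  have "?P \<le> g y + hy - g xj - hx"
    by (rule lim_ineq[OF c0 key])
  thus ?thesis using real by simp
qed

theorem lemma3p1:
  fixes f :: "'a::euclidean_space \<Rightarrow> real"
    and h :: "'a \<Rightarrow> ereal"
    and M lam \<delta> :: real
    and w0 :: "'a"
    and \<Gamma> :: "nat \<Rightarrow> 'a \<Rightarrow> real"
    and x xt :: "nat \<Rightarrow> 'a"
    and j :: nat
    and \<phi> \<psi> :: "'a \<Rightarrow> ereal"
    and m t :: "nat \<Rightarrow> ereal"
  assumes f_convex: "convex_on UNIV f"
    and f_lip: "M-lipschitz_on UNIV f"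
    and h_proper: "proper_fun h" and h_closed: "closed_fun h" and h_convex: "convex_fun h"
    and phi_def: "\<phi> = (\<lambda>u. ereal (f u) + h u)"
    and lam_pos: "lam > 0" and del: "\<delta> > 0"
    and w0_dom: "w0 \<in> edom h"
    and x0: "x 0 = w0"
    and psi_def: "\<psi> = (\<lambda>u. \<phi> u + ereal (norm (u - w0) ^ 2 / (2 * lam)))"
    and Gamma_convex: "\<And>i. i \<ge> 1 \<Longrightarrow> convex_on UNIV (\<Gamma> i)"
    and Gamma_le: "\<And>i u. i \<ge> 1 \<Longrightarrow> \<Gamma> i u \<le> f u"
    and x_argmin: "\<And>i u. i \<ge> 1 \<Longrightarrow>
        ereal (\<Gamma> i (x i)) + h (x i) + ereal (norm (x i - w0) ^ 2 / (2 * lam))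
        \<le> ereal (\<Gamma> i u) + h u + ereal (norm (u - w0) ^ 2 / (2 * lam))"
    and m_def: "\<And>i. m i = ereal (\<Gamma> i (x i)) + h (x i) + ereal (norm (x i - w0) ^ 2 / (2 * lam))"
    and xt_mem: "\<And>i. i \<ge> 1 \<Longrightarrow> xt i \<in> x ` {0..i}"
    and xt_min: "\<And>i l. i \<ge> 1 \<Longrightarrow> l \<le> i \<Longrightarrow> \<psi> (xt i) \<le> \<psi> (x l)"
    and t_def: "\<And>i. t i = \<psi> (xt i) - m i"
    and j_pos: "j \<ge> 1"
    and t_j: "t j \<le> ereal \<delta>"
    and t_before: "\<And>i. 1 \<le> i \<Longrightarrow> i < j \<Longrightarrow> t i > ereal \<delta>"
  shows "let wk = x j; wtk = xt j; uk = (1 / lam) *\<^sub>R (w0 - x j);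
             etak = real_of_ereal (\<phi> (xt j)) - (\<Gamma> j (x j) + real_of_ereal (h (x j)))
                  + (1 / lam) * inner (w0 - x j) (x j - xt j)
         in uk \<in> eps_subdiff \<phi> etak wtk
            \<and> norm (lam *\<^sub>R uk + wtk - w0) ^ 2 + 2 * lam * etak \<le> 2 * lam * \<delta>
            \<and> wk = w0 - lam *\<^sub>R uk"
proof -
  let ?q = "\<lambda>u. norm (u - w0) ^ 2 / (2 * lam)"
  define H where "H = (\<lambda>u. real_of_ereal (h u))"
  have hninf: "\<And>u. h u \<noteq> -\<infinity>" using h_proper by (simp add: proper_fun_def)
  have hw0: "h w0 \<noteq> \<infinity>" using w0_dom by (simp add: edom_def)
  have hfin: "h (x i) = ereal (H (x i))" for i
  proof (cases "i = 0")
    case True thus ?thesis using hw0 hninf x0 by (cases "h w0") (auto simp: H_def)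
  next
    case False
    hence "ereal (\<Gamma> i (x i)) + h (x i) + ereal (?q (x i)) \<le> ereal (\<Gamma> i w0) + h w0 + ereal (?q w0)"
      using x_argmin[of i w0] by simp
    moreover have "ereal (\<Gamma> i w0) + h w0 + ereal (?q w0) \<noteq> \<infinity>" using hw0 hninf[of w0] by (cases "h w0") auto
    ultimately have "h (x i) \<noteq> \<infinity>" by auto
    thus ?thesis using hninf[of "x i"] by (cases "h (x i)") (auto simp: H_def)
  qed
  obtain l where l: "l \<le> j" "xt j = x l" using xt_mem[OF j_pos] by auto
  have hxt: "h (xt j) = ereal (H (xt j))" using hfin l by simp
  define xj where "xj = x j"
  define y0 where "y0 = xt j"
  define s where "s = (1 / lam) *\<^sub>R (w0 - xj)"
  define eta where "eta = real_of_ereal (\<phi> (xt j)) - (\<Gamma> j (x j) + real_of_ereal (h (x j)))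
                  + (1 / lam) * inner (w0 - x j) (x j - xt j)"
  have phixt: "\<phi> y0 = ereal (f y0 + H y0)" using hxt by (simp add: phi_def y0_def)
  have eta_eq: "eta = f y0 + H y0 - (\<Gamma> j xj + H xj) + (1 / lam) * inner (w0 - xj) (xj - y0)"
    unfolding eta_def using phixt hfin[of j] by (simp add: xj_def y0_def)
  have hxj: "h xj = ereal (H xj)" using hfin xj_def by simp
  have sub: "s \<in> eps_subdiff \<phi> eta y0"
    unfolding eps_subdiff_def
  proof (intro CollectI allI)
    fix y
    have A: "ereal (\<Gamma> j y) + h y \<ge> ereal (\<Gamma> j xj + H xj + inner s (y - xj))"
      unfolding s_def
      by (rule prox_subgrad[OF Gamma_convex[OF j_pos] h_convex hninf hxj lam_pos])
         (use x_argmin[OF j_pos] xj_def in auto)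
    have B: "ereal (\<Gamma> j y) + h y \<le> \<phi> y"
      unfolding phi_def using Gamma_le[OF j_pos, of y] by (intro add_right_mono) auto
    have C: "\<phi> y0 + ereal (inner s (y - y0) - eta) = ereal (\<Gamma> j xj + H xj + inner s (y - xj))"
      unfolding phixt eta_eq s_def using lam_pos
      by (simp add: inner_diff_right algebra_simps)
    show "\<phi> y0 + ereal (inner s (y - y0) - eta) \<le> \<phi> y" using A B C by simp
  qed
  have tj: "f y0 + H y0 + ?q y0 - (\<Gamma> j xj + H xj + ?q xj) \<le> \<delta>"
    using t_j unfolding t_def m_def psi_def using phixt hxj by (simp add: xj_def y0_def)
  have nrm: "norm (y0 - w0) ^ 2 = norm (y0 - xj) ^ 2 + 2 * inner (y0 - xj) (xj - w0) + norm (xj - w0) ^ 2"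
    unfolding power2_norm_eq_inner by (simp add: inner_diff_left inner_diff_right inner_commute algebra_simps)
  have inn: "inner (w0 - xj) (xj - y0) = inner (y0 - xj) (xj - w0)"
    by (metis inner_commute inner_minus_left inner_minus_right minus_diff_eq)
  have ls: "lam *\<^sub>R s = w0 - xj" unfolding s_def using lam_pos by simp
  have "norm (lam *\<^sub>R s + y0 - w0) ^ 2 + 2 * lam * eta \<le> 2 * lam * \<delta>"
  proof -
    have e1: "lam *\<^sub>R s + y0 - w0 = y0 - xj" unfolding ls by simp
    have "2 * lam * (f y0 + H y0 + ?q y0 - (\<Gamma> j xj + H xj + ?q xj)) \<le> 2 * lam * \<delta>"
      using tj lam_pos by simp
    moreover have "2 * lam * (f y0 + H y0 + ?q y0 - (\<Gamma> j xj + H xj + ?q xj))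
       = 2 * lam * (f y0 + H y0 - (\<Gamma> j xj + H xj)) + norm (y0 - w0) ^ 2 - norm (xj - w0) ^ 2"
      using lam_pos by (simp add: field_simps)
    moreover have "2 * lam * eta = 2 * lam * (f y0 + H y0 - (\<Gamma> j xj + H xj)) + 2 * inner (y0 - xj) (xj - w0)"
      unfolding eta_eq inn using lam_pos by (simp add: field_simps)
    ultimately show ?thesis unfolding e1 nrm by linarith
  qed
  moreover have "xj = w0 - lam *\<^sub>R s" unfolding ls by simp
  ultimately show ?thesis using sub
    by (simp add: Let_def xj_def y0_def s_def eta_def)
qed

end
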